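(* Let $(S_n)_{n\ge0}$ be defined by $S_0=3$, $S_1=1$, $S_2=3$ and $S_{n+1}=S_n+S_{n-1}+S_{n-2}$ for $n\ge 2$. Let $\alpha,\beta,\gamma$ be the roots of $x^3-x^2-x-1=0$ and $C_n=\alpha^n\beta^n+\alpha^n\gamma^n+\beta^n\gamma^n$ for $n\ge0$. Then for all $n\ge 0$, $$2S_n=C_n^2-C_{2n}.$$
   Context: $S_n$ is the generalized Lucas (generalized Tribonacci) sequence. *)

theory Defs
  imports Complex_Main
begin

fun S :: "nat \<Rightarrow> int" where
  "S 0 = 3"
| "S (Suc 0) = 1"
| "S (Suc (Suc 0)) = 3"
| "S (Suc (Suc (Suc n))) = S (Suc (Suc n)) + S (Suc n) + S n"

definition C :: "complex \<Rightarrow> complex \<Rightarrow> complex \<Rightarrow> nat \<Rightarrow> complex" where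
  "C \<alpha> \<beta> \<gamma> n = \<alpha>^n * \<beta>^n + \<alpha>^n * \<gamma>^n + \<beta>^n * \<gamma>^n"

end

theory Submission
  imports Defs
begin

lemma S_pow:
  fixes a b c :: complex
  assumes ha: "a^3 = a^2 + a + 1" and hb: "b^3 = b^2 + b + 1" and hc: "c^3 = c^2 + c + 1"
    and e1: "a + b + c = 1" and e2: "a*b + a*c + b*c = -1"
  shows "of_int (S n) = a^n + b^n + c^n"
proof (induction n rule: S.induct)
  case 1 then show ?case by simp
next
  case 2 then show ?case using e1 by simp
next
  case 3
  have "a^2+b^2+c^2 = (a+b+c)^2 - 2*(a*b+a*c+b*c)" by (simp add: power2_eq_square algebra_simps)
  then show ?case using e1 e2 by (simp add: power2_eq_square)
next
  case (4 n)
  have p: "x^(Suc (Suc (Suc n))) = x^(Suc (Suc n)) + x^(Suc n) + x^n" if "x^3 = x^2+x+1" for x :: complex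
  proof -
    have "x^(Suc (Suc (Suc n))) = x^3 * x^n" by (simp add: power_add power3_eq_cube)
    also have "\<dots> = (x^2+x+1)*x^n" using that by simp
    finally show ?thesis by (simp add: algebra_simps power2_eq_square)
  qed
  show ?case using 4 p[OF ha] p[OF hb] p[OF hc] by simp
qed

theorem mainTheorem10:
  fixes \<alpha> \<beta> \<gamma> :: complex and n :: nat
  assumes roots: "\<forall>x::complex. x^3 - x^2 - x - 1 = (x - \<alpha>) * (x - \<beta>) * (x - \<gamma>)"
  shows "2 * of_int (S n) = (C \<alpha> \<beta> \<gamma> n)^2 - C \<alpha> \<beta> \<gamma> (2 * n)"
proof -
  have r0: "-1 = (0 - \<alpha>) * (0 - \<beta>) * (0 - \<gamma>)" using roots[rule_format, of 0] by simp
  have r1: "-2 = (1 - \<alpha>) * (1 - \<beta>) * (1 - \<gamma>)" using roots[rule_format, of 1] by simp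
  have r2: "-2 = (-1 - \<alpha>) * (-1 - \<beta>) * (-1 - \<gamma>)" using roots[rule_format, of "-1"] by simp
  have e3: "\<alpha>*\<beta>*\<gamma> = 1" using r0 by (simp add: algebra_simps)
  have A: "1 - (\<alpha>+\<beta>+\<gamma>) + (\<alpha>*\<beta>+\<alpha>*\<gamma>+\<beta>*\<gamma>) - \<alpha>*\<beta>*\<gamma> = -2"
    using r1 by (simp add: algebra_simps)
  have B: "1 + (\<alpha>+\<beta>+\<gamma>) + (\<alpha>*\<beta>+\<alpha>*\<gamma>+\<beta>*\<gamma>) + \<alpha>*\<beta>*\<gamma> = 2"
    using r2 by (simp add: algebra_simps)
  define s where "s = \<alpha>+\<beta>+\<gamma>"
  define p where "p = \<alpha>*\<beta>+\<alpha>*\<gamma>+\<beta>*\<gamma>"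
  have A': "p - s = -2" using A e3 unfolding s_def[symmetric] p_def[symmetric] by (simp add: algebra_simps)
  have B': "s + p = 0" using B e3 unfolding s_def[symmetric] p_def[symmetric] by (simp add: algebra_simps)
  have "2*p = (p - s) + (s + p)" by simp
  then have "2*p = -2" using A' B' by simp
  then have e2: "\<alpha>*\<beta>+\<alpha>*\<gamma>+\<beta>*\<gamma> = -1" unfolding p_def[symmetric] by simp
  have e1: "\<alpha>+\<beta>+\<gamma> = 1" using B e2 e3 by (simp add: algebra_simps)
  have rt: "x^3 = x^2 + x + 1" if "x = \<alpha> \<or> x = \<beta> \<or> x = \<gamma>" for x
  proof -
    have "x^3 - x^2 - x - 1 = 0" using roots[rule_format, of x] that by auto
    then show ?thesis by (simp add: algebra_simps)
  qed
  have Sn: "of_int (S n) = \<alpha>^n + \<beta>^n + \<gamma>^n"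
    by (rule S_pow[OF rt rt rt e1 e2]) auto
  have "(C \<alpha> \<beta> \<gamma> n)^2 - C \<alpha> \<beta> \<gamma> (2 * n)
        = 2 * (\<alpha>*\<beta>*\<gamma>)^n * (\<alpha>^n + \<beta>^n + \<gamma>^n)"
    unfolding C_def by (simp add: power_mult_distrib power_mult power2_eq_square algebra_simps)
  then show ?thesis using Sn e3 by simp
qed

end
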